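(* Let $(V_1\xrightarrow{\mathrm d}V_0,F_1,F_2)$ be a unital 2-term representation up to homotopy of a Lie group $G$ such that $F_1$ is an (associative) action, i.e. $F_1(g_1g_2)=F_1(g_1)F_1(g_2)$. Let $G\ltimes V_0$ be the semidirect product group $(g_1,\xi_1)(g_2,\xi_2)=(g_1g_2,\xi_1+F_1(g_1)\xi_2)$, acting on $V_1$ by $\widetilde F_1(g,\xi)(m)=F_1(g)(m)$. Define $\widetilde F_2:(G\ltimes V_0)^3\to V_1$ by $\widetilde F_2((g_1,\xi_1),(g_2,\xi_2),(g_3,\xi_3))=F_2(g_1,g_2)(\xi_3)$. Then $\widetilde F_2$ is a smooth group 3-cocycle, representing an element of $H^3_{sm}(G\ltimes V_0,V_1)$.
   Context: A unital 2-term representation up to homotopy of a Lie group $G$ consists of: a 2-term complex of vector spaces $V_1\xrightarrow{\mathrm d}V_0$; a smooth map $F_1$ assigning to each $g\in G$ linear maps $F_1(g)$ on $V_0$ and on $V_1$ (not necessarily multiplicative) with $\mathrm dF_1(g)=F_1(g)\mathrm d$ and $F_1(1_G)=\mathrm{Id}$; and a smooth map $F_2:G\times G\to\mathrm{Hom}(V_0,V_1)$ with $F_1(g_1)F_1(g_2)-F_1(g_1g_2)=[\mathrm d,F_2(g_1,g_2)]$ (i.e. equal to $\mathrm d\circ F_2(g_1,g_2)$ on $V_0$ and $F_2(g_1,g_2)\circ\mathrm d$ on $V_1$) and $F_1(g_1)\circ F_2(g_2,g_3)-F_2(g_1g_2,g_3)+F_2(g_1,g_2g_3)-F_2(g_1,g_2)\circ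 F_1(g_3)=0$. $H^\bullet_{sm}(K,N)$ denotes group cohomology of a Lie group $K$ with values in a module $N$ computed with smooth cochains $K^{\times n}\to N$ and the usual group-cohomology differential. *)

theory Defs
  imports "HOL-Analysis.Analysis" "HOL-Algebra.Group"
begin

definition semidirect ::
  "('g, 'm) monoid_scheme \<Rightarrow> ('g \<Rightarrow> 'a::real_vector \<Rightarrow> 'a) \<Rightarrow> ('g \<times> 'a) monoid" where
  "semidirect G phi =
     \<lparr> carrier = carrier G \<times> UNIV,
       mult = (\<lambda>p q. (fst p \<otimes>\<^bsub>G\<^esub> fst q, snd p + phi (fst p) (snd q))),
       one = (\<one>\<^bsub>G\<^esub>, 0) \<rparr>"

text \<open>An n-cochain is a function
  on lists of group elements of length n (values on other lists are irrelevant).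
  (delta c)(h_0,...,h_n) = h_0 . c(h_1,...,h_n)
     + sum_{i=1}^{n} (-1)^i c(h_0,...,h_{i-1} h_i,...,h_n) + (-1)^(n+1) c(h_0,...,h_{n-1}).\<close>
definition grp_coboundary ::
  "('h, 'm) monoid_scheme \<Rightarrow> ('h \<Rightarrow> 'v::real_vector \<Rightarrow> 'v) \<Rightarrow> nat \<Rightarrow> ('h list \<Rightarrow> 'v) \<Rightarrow> 'h list \<Rightarrow> 'v" where
  "grp_coboundary H act n c hs =
     act (hs ! 0) (c (tl hs))
     + (\<Sum>i\<in>{1..n}. ((-1::real) ^ i) *\<^sub>R
          c (take (i - 1) hs @ [hs ! (i - 1) \<otimes>\<^bsub>H\<^esub> hs ! i] @ drop (i + 1) hs))
     + ((-1::real) ^ (n + 1)) *\<^sub>R c (take n hs)"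

definition grp_cocycle ::
  "('h, 'm) monoid_scheme \<Rightarrow> ('h \<Rightarrow> 'v::real_vector \<Rightarrow> 'v) \<Rightarrow> nat \<Rightarrow> ('h list \<Rightarrow> 'v) \<Rightarrow> bool" where
  "grp_cocycle H act n c \<longleftrightarrow>
     (\<forall>hs. length hs = n + 1 \<and> set hs \<subseteq> carrier H \<longrightarrow> grp_coboundary H act n c hs = 0)"

end

theory Submission
  imports Defs
begin

theorem mainTheorem7:
  fixes G :: "('g, 'z) monoid_scheme"
    and d :: "'v1::real_vector \<Rightarrow> 'v0::real_vector"
    and F10 :: "'g \<Rightarrow> 'v0 \<Rightarrow> 'v0"
    and F11 :: "'g \<Rightarrow> 'v1 \<Rightarrow> 'v1"
    and F2 :: "'g \<Rightarrow> 'g \<Rightarrow> 'v0 \<Rightarrow> 'v1"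
  assumes grp: "group G"
    and lin_d: "linear d"
    and lin_F10: "\<And>g. g \<in> carrier G \<Longrightarrow> linear (F10 g)"
    and lin_F11: "\<And>g. g \<in> carrier G \<Longrightarrow> linear (F11 g)"
    and chain: "\<And>g m. g \<in> carrier G \<Longrightarrow> d (F11 g m) = F10 g (d m)"
    and unit0: "F10 \<one>\<^bsub>G\<^esub> = id"
    and unit1: "F11 \<one>\<^bsub>G\<^esub> = id"
    and lin_F2: "\<And>g1 g2. g1 \<in> carrier G \<Longrightarrow> g2 \<in> carrier G \<Longrightarrow> linear (F2 g1 g2)"
    and htpy0: "\<And>g1 g2 x. g1 \<in> carrier G \<Longrightarrow> g2 \<in> carrier G \<Longrightarrow>
        F10 g1 (F10 g2 x) - F10 (g1 \<otimes>\<^bsub>G\<^esub> g2) x = d (F2 g1 g2 x)"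
    and htpy1: "\<And>g1 g2 m. g1 \<in> carrier G \<Longrightarrow> g2 \<in> carrier G \<Longrightarrow>
        F11 g1 (F11 g2 m) - F11 (g1 \<otimes>\<^bsub>G\<^esub> g2) m = F2 g1 g2 (d m)"
    and coh: "\<And>g1 g2 g3 x. g1 \<in> carrier G \<Longrightarrow> g2 \<in> carrier G \<Longrightarrow> g3 \<in> carrier G \<Longrightarrow>
        F11 g1 (F2 g2 g3 x) - F2 (g1 \<otimes>\<^bsub>G\<^esub> g2) g3 x + F2 g1 (g2 \<otimes>\<^bsub>G\<^esub> g3) x
          - F2 g1 g2 (F10 g3 x) = 0"
    and act0: "\<And>g1 g2 x. g1 \<in> carrier G \<Longrightarrow> g2 \<in> carrier G \<Longrightarrow>
        F10 (g1 \<otimes>\<^bsub>G\<^esub> g2) x = F10 g1 (F10 g2 x)"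
    and act1: "\<And>g1 g2 m. g1 \<in> carrier G \<Longrightarrow> g2 \<in> carrier G \<Longrightarrow>
        F11 (g1 \<otimes>\<^bsub>G\<^esub> g2) m = F11 g1 (F11 g2 m)"
  shows "group (semidirect G F10) \<and>
         grp_cocycle (semidirect G F10) (\<lambda>p m. F11 (fst p) m) 3
           (\<lambda>hs. F2 (fst (hs ! 0)) (fst (hs ! 1)) (snd (hs ! 2)))"
proof -
  interpret G: group G by (rule grp)
  have lin10: "F10 g (a + b) = F10 g a + F10 g b" "F10 g (- a) = - F10 g a"
    if "g \<in> carrier G" for g a b
    using lin_F10[OF that] by (simp_all add: linear_add linear_neg)
  have lin2: "F2 g h (a + b) = F2 g h a + F2 g h b" if "g \<in> carrier G" "h \<in> carrier G" for g h a b
    using lin_F2[OF that] by (simp add: linear_add)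
  have g1: "group (semidirect G F10)"
  proof (rule groupI)
    fix x y assume "x \<in> carrier (semidirect G F10)" "y \<in> carrier (semidirect G F10)"
    then show "x \<otimes>\<^bsub>semidirect G F10\<^esub> y \<in> carrier (semidirect G F10)"
      by (auto simp: semidirect_def)
  next
    show "\<one>\<^bsub>semidirect G F10\<^esub> \<in> carrier (semidirect G F10)" by (simp add: semidirect_def)
  next
    fix x y z assume "x \<in> carrier (semidirect G F10)" "y \<in> carrier (semidirect G F10)"
      "z \<in> carrier (semidirect G F10)"
    then show "x \<otimes>\<^bsub>semidirect G F10\<^esub> y \<otimes>\<^bsub>semidirect G F10\<^esub> z =
        x \<otimes>\<^bsub>semidirect G F10\<^esub> (y \<otimes>\<^bsub>semidirect G F10\<^esub> z)"
      by (auto simp: semidirect_def G.m_assoc act0 lin10)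
  next
    fix x assume "x \<in> carrier (semidirect G F10)"
    then show "\<one>\<^bsub>semidirect G F10\<^esub> \<otimes>\<^bsub>semidirect G F10\<^esub> x = x"
      by (auto simp: semidirect_def unit0)
  next
    fix x assume x: "x \<in> carrier (semidirect G F10)"
    obtain g a where xe: "x = (g, a)" and g: "g \<in> carrier G"
      using x by (cases x) (auto simp: semidirect_def)
    have "(inv\<^bsub>G\<^esub> g, - F10 (inv\<^bsub>G\<^esub> g) a) \<otimes>\<^bsub>semidirect G F10\<^esub> x = \<one>\<^bsub>semidirect G F10\<^esub>"
      using g by (simp add: semidirect_def xe act0[symmetric] lin10)
    moreover have "(inv\<^bsub>G\<^esub> g, - F10 (inv\<^bsub>G\<^esub> g) a) \<in> carrier (semidirect G F10)"
      using g by (simp add: semidirect_def)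
    ultimately show "\<exists>y\<in>carrier (semidirect G F10). y \<otimes>\<^bsub>semidirect G F10\<^esub> x = \<one>\<^bsub>semidirect G F10\<^esub>"
      by blast
  qed
  have g2: "grp_cocycle (semidirect G F10) (\<lambda>p m. F11 (fst p) m) 3
           (\<lambda>hs. F2 (fst (hs ! 0)) (fst (hs ! 1)) (snd (hs ! 2)))"
    unfolding grp_cocycle_def
  proof (intro allI impI)
    fix hs :: "('g \<times> 'v0) list"
    assume h: "length hs = 3 + 1 \<and> set hs \<subseteq> carrier (semidirect G F10)"
    then obtain h0 h1 h2 h3 where hs: "hs = [h0, h1, h2, h3]"
      by (cases hs; simp; case_tac list; simp; case_tac lista; simp; case_tac listb; simp)
    obtain g0 x0 g1 x1 g2 x2 g3 x3 where e: "h0 = (g0,x0)" "h1 = (g1,x1)" "h2 = (g2,x2)" "h3 = (g3,x3)"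
      by (cases h0, cases h1, cases h2, cases h3) auto
    have c: "g0 \<in> carrier G" "g1 \<in> carrier G" "g2 \<in> carrier G" "g3 \<in> carrier G"
      using h by (auto simp: hs e semidirect_def)
    have sum: "{1..3::nat} = {1,2,3}" by auto
    have co: "F11 g0 (F2 g1 g2 x3) - F2 (g0 \<otimes>\<^bsub>G\<^esub> g1) g2 x3 + F2 g0 (g1 \<otimes>\<^bsub>G\<^esub> g2) x3
          - F2 g0 g1 (F10 g2 x3) = 0" using coh c by blast
    show "grp_coboundary (semidirect G F10) (\<lambda>p m. F11 (fst p) m) 3
           (\<lambda>hs. F2 (fst (hs ! 0)) (fst (hs ! 1)) (snd (hs ! 2))) hs = 0"
      using co
      by (simp add: grp_coboundary_def sum hs e semidirect_def lin2 c algebra_simps numeral_eq_Suc)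
  qed
  show ?thesis using g1 g2 by blast
qed

end
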